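(* Let $d,k\ge 1$, let $A\in\mathbb{R}^{k\times d}$ (a linear "style extractor"), let $y_1\in\mathbb{R}^k$ (reference style features), let $x_0\in\mathbb{R}^d$, let $0\le t_0<1$, let $\gamma>0$, and assume that $A^TA$ is invertible. Consider the deterministic optimal control problem $$\min_{u\in\mathcal{U}}\ \int_{t_0}^{1}\frac12\|u(X^u_t,t)\|^2\,dt+\frac{\gamma}{2}\|AX^u_1-y_1\|_2^2,\qquad\text{where } \mathrm{d}X^u_t=u(X^u_t,t)\,\mathrm{d}t,\quad X^u_{t_0}=x_0 .$$ Then, in the limit $\gamma\to\infty$, the optimal controller is $$u^*(x_t,t)=\frac{(A^TA)^{-1}A^T\,(y_1-Ax_t)}{1-t},$$ where $x_t$ denotes the current state $X^u_t$, which yields the controlled dynamic $$\mathrm{d}X^u_t=\frac{(A^TA)^{-1}A^T\,(y_1-AX^u_t)}{1-t}\,\mathrm{d}t .$$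
   Context: $\mathcal{U}$ denotes the admissible set of (feedback) controllers $u:\mathbb{R}^d\times[0,1]\to\mathbb{R}^d$. For a controller $u$, $X^u_t\in\mathbb{R}^d$ is the state trajectory generated by the stated dynamics. The optimal controller is the minimizer of the stated cost (computed via the Hamilton–Jacobi–Bellman equation / minimum principle), and "in the limit $\gamma\to\infty$" refers to the limit of this optimal controller as the terminal-cost weight $\gamma$ tends to infinity. *)

theory Defs
  imports "HOL-Analysis.Analysis"
begin

definition is_trajectory ::
  "(real^'d \<Rightarrow> real \<Rightarrow> real^'d) \<Rightarrow> real \<Rightarrow> real^'d \<Rightarrow> (real \<Rightarrow> real^'d) \<Rightarrow> bool" where
  "is_trajectory u s x X \<longleftrightarrow> X s = x \<and>
     (\<forall>t\<in>{s..1}. (X has_vector_derivative u (X t) t) (at t within {s..1}))"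

definition admissible :: "(real^'d \<Rightarrow> real \<Rightarrow> real^'d) \<Rightarrow> bool" where
  "admissible u \<longleftrightarrow> continuous_on (UNIV \<times> {0..1}) (\<lambda>(x,t). u x t) \<and>
     (\<forall>x. \<forall>s\<in>{0..<1}. \<exists>X. is_trajectory u s x X \<and>
          (\<forall>Y. is_trajectory u s x Y \<longrightarrow> (\<forall>t\<in>{s..1}. Y t = X t)))"

definition traj ::
  "(real^'d \<Rightarrow> real \<Rightarrow> real^'d) \<Rightarrow> real \<Rightarrow> real^'d \<Rightarrow> real \<Rightarrow> real^'d" where
  "traj u s x = (SOME X. is_trajectory u s x X)"

definition cost ::
  "real^'d^'k \<Rightarrow> real^'k \<Rightarrow> real \<Rightarrow> (real^'d \<Rightarrow> real \<Rightarrow> real^'d) \<Rightarrow> real \<Rightarrow> real^'d \<Rightarrow> real" where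
  "cost A y \<gamma> u s x =
     integral {s..1} (\<lambda>t. (1/2) * (norm (u (traj u s x t) t))\<^sup>2)
     + (\<gamma>/2) * (norm (A *v traj u s x 1 - y))\<^sup>2"

definition optimal_from ::
  "real^'d^'k \<Rightarrow> real^'k \<Rightarrow> real \<Rightarrow> (real^'d \<Rightarrow> real \<Rightarrow> real^'d) \<Rightarrow> real \<Rightarrow> real^'d \<Rightarrow> bool" where
  "optimal_from A y \<gamma> u s x \<longleftrightarrow> admissible u \<and>
     (\<forall>v. admissible v \<longrightarrow> cost A y \<gamma> u s x \<le> cost A y \<gamma> v s x)"

end

theory Submission imports Defs begin

definition PP :: "real^'d^'k \<Rightarrow> real \<Rightarrow> real \<Rightarrow> real^'d^'d" where
  "PP A g t = mat 1 + (g*(1-t)) *\<^sub>R (transpose A ** A)"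
definition bb :: "real^'d^'k \<Rightarrow> real^'k \<Rightarrow> real \<Rightarrow> real^'d \<Rightarrow> real^'d" where
  "bb A y g x = g *\<^sub>R (transpose A *v (y - A *v x))"
definition uopt :: "real^'d^'k \<Rightarrow> real^'k \<Rightarrow> real \<Rightarrow> real^'d \<Rightarrow> real \<Rightarrow> real^'d" where
  "uopt A y g x t = (\<chi> k. det(\<chi> i j. if j=k then bb A y g x $i else PP A g t $i$j) / det (PP A g t))"

lemma tr_inner: "w \<bullet> (transpose A *v z) = (A *v w) \<bullet> (z::real^'k)"
  for A :: "real^'d^'k"
  by (metis dot_lmul_matrix vector_transpose_matrix)

lemma M_inner: "w \<bullet> ((transpose A ** A) *v w) = (A *v w) \<bullet> (A *v w)"
  for A :: "real^'d^'k"
  using tr_inner[of w A "A *v w"] by (simp add: matrix_vector_mul_assoc[symmetric])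

lemma tr_inner': "w \<bullet> (z v* A) = (A *v w) \<bullet> (z::real^'k)"
  for A :: "real^'d^'k"
  using tr_inner[of w A z] by simp

lemma PP_apply: "PP A g t *v w = w + (g*(1-t)) *\<^sub>R (transpose A *v (A *v w))"
  by (simp add: PP_def algebra_simps scaleR_matrix_vector_assoc matrix_vector_mul_assoc)

lemma PP_inner: "w \<bullet> (PP A g t *v w) = w \<bullet> w + (g*(1-t)) * ((A *v w) \<bullet> (A *v w))"
  by (simp add: PP_apply inner_add_right tr_inner')

lemma PP_inner_ge: "0 \<le> g \<Longrightarrow> t \<le> 1 \<Longrightarrow> w \<bullet> w \<le> w \<bullet> (PP A g t *v w)"
  unfolding PP_inner by (simp add: mult_nonneg_nonneg)

lemma PP_det: assumes "0 \<le> g" "t \<le> 1" shows "det (PP A g t) \<noteq> 0"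
proof -
  have "\<forall>w. PP A g t *v w = 0 \<longrightarrow> w = 0"
    using PP_inner_ge[OF assms, of _ A]
    by (metis inner_eq_zero_iff inner_zero_right order_antisym inner_ge_zero)
  then have "invertible (PP A g t)"
    using matrix_left_invertible_ker invertible_left_inverse by blast
  then show ?thesis using invertible_det_nz by blast
qed

lemma uopt_iff: assumes "0 \<le> g" "t \<le> 1"
  shows "PP A g t *v w = bb A y g x \<longleftrightarrow> w = uopt A y g x t"
  unfolding uopt_def using cramer[OF PP_det[OF assms]] by blast

lemma uopt_eq: assumes "0 \<le> g" "t \<le> 1"
  shows "PP A g t *v uopt A y g x t = bb A y g x"
  using uopt_iff[OF assms] by blast


lemma continuous_on_det:
  fixes F :: "'a::topological_space \<Rightarrow> real^'n^'n"
  assumes "continuous_on S F"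
  shows "continuous_on S (\<lambda>p. det (F p))"
  unfolding det_def
  by (intro continuous_on_sum continuous_on_mult continuous_on_const continuous_on_prod
      continuous_on_component assms)

lemma continuous_on_matrixI:
  fixes F :: "'a::topological_space \<Rightarrow> real^'n^'m"
  assumes "\<And>i j. continuous_on S (\<lambda>p. F p $ i $ j)"
  shows "continuous_on S F"
proof -
  have "continuous_on S (\<lambda>p. \<chi> i. \<chi> j. F p $ i $ j)"
    by (intro continuous_on_vec_lambda assms)
  then show ?thesis by simp
qed

lemma uopt_cont: fixes A :: "real^'d^'k" assumes "0 \<le> g"
  shows "continuous_on (UNIV \<times> {0..1}) (\<lambda>(x,t). uopt A y g x t)"
proof -
  have cb: "continuous_on S (\<lambda>p. bb A y g (fst p))" for S :: "((real^'d::finite) \<times> real) set"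
    unfolding bb_def
    by (intro continuous_intros bounded_linear.continuous_on[OF matrix_vector_mul_bounded_linear])
  have cP: "continuous_on S (\<lambda>p. PP A g (snd p) $ i $ j)" for S :: "((real^'d::finite) \<times> real) set" and i j
    unfolding PP_def by (simp add: mat_def) (auto intro!: continuous_intros)
  show ?thesis
    unfolding uopt_def split_def
    apply (intro continuous_on_vec_lambda continuous_on_divide continuous_on_det continuous_on_matrixI ballI)
    subgoal for k i j using cb cP by (cases "j = k") (auto intro!: continuous_intros)
    subgoal by (rule cP)
    subgoal using PP_det[OF assms] by fastforce
    done
qed


lemma bb_shift: "bb A y g (x + c *\<^sub>R v) = bb A y g x - (g*c) *\<^sub>R (transpose A *v (A *v v))"
  unfolding bb_def by (simp add: algebra_simps)

lemma bb_diff: "bb A y g x1 - bb A y g x2 = - g *\<^sub>R (transpose A *v (A *v (x1 - x2)))"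
  unfolding bb_def by (simp add: algebra_simps)

lemma line_uopt:
  assumes "0 \<le> g" "s \<le> 1" "t \<le> 1"
  shows "uopt A y g (x + (t - s) *\<^sub>R uopt A y g x s) t = uopt A y g x s"
proof -
  let ?v = "uopt A y g x s"
  have e: "PP A g s *v ?v = bb A y g x" using uopt_eq[OF assms(1,2)] .
  have "PP A g t *v ?v = bb A y g (x + (t - s) *\<^sub>R ?v)"
    using e unfolding bb_shift PP_apply
    by (simp add: algebra_simps)
  then show ?thesis using uopt_iff[OF assms(1,3)] by metis
qed

lemma traj_line:
  assumes "0 \<le> g" "s \<le> 1"
  shows "is_trajectory (uopt A y g) s x (\<lambda>t. x + (t - s) *\<^sub>R uopt A y g x s)"
  unfolding is_trajectory_def
proof (intro conjI ballI)
  fix t assume t: "t \<in> {s..1}"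
  have "((\<lambda>t. x + (t - s) *\<^sub>R uopt A y g x s) has_vector_derivative uopt A y g x s) (at t within {s..1})"
    by (auto intro!: derivative_eq_intros)
  then show "((\<lambda>t. x + (t - s) *\<^sub>R uopt A y g x s) has_vector_derivative
      uopt A y g (x + (t - s) *\<^sub>R uopt A y g x s) t) (at t within {s..1})"
    using line_uopt[OF assms(1,2), of t A y x] t by simp
qed simp


lemma traj_unique:
  fixes A :: "real^'d^'k"
  assumes g: "0 \<le> g" and s: "s \<le> 1"
    and Y: "is_trajectory (uopt A y g) s x Y" and Z: "is_trajectory (uopt A y g) s x Z"
  shows "\<forall>t\<in>{s..1}. Y t = Z t"
proof
  let ?u = "uopt A y g"
  define D where "D t = Y t - Z t" for t
  define D' where "D' t = ?u (Y t) t - ?u (Z t) t" for t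
  define E where "E t = D t \<bullet> D t + (g*(1-t)) * ((A *v D t) \<bullet> (A *v D t))" for t
  define E' where "E' t = (D t \<bullet> D' t + D' t \<bullet> D t) +
      ((g*(1-t)) * ((A *v D t) \<bullet> (A *v D' t) + (A *v D' t) \<bullet> (A *v D t)) + (-g) * ((A *v D t) \<bullet> (A *v D t)))" for t
  have dD: "(D has_vector_derivative D' t) (at t within {s..1})" if "t \<in> {s..1}" for t
    using Y Z that unfolding is_trajectory_def D_def[abs_def] D'_def
    by (auto intro!: has_vector_derivative_diff)
  have dE: "(E has_vector_derivative E' t) (at t within {s..1})" if t: "t \<in> {s..1}" for t
  proof -
    have d1: "((\<lambda>t. D t \<bullet> D t) has_vector_derivative (D t \<bullet> D' t + D' t \<bullet> D t)) (at t within {s..1})"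
      by (rule bounded_bilinear.has_vector_derivative[OF bounded_bilinear_inner dD[OF t] dD[OF t]])
    have dA: "((\<lambda>t. A *v D t) has_vector_derivative A *v D' t) (at t within {s..1})"
      by (rule bounded_linear.has_vector_derivative[OF matrix_vector_mul_bounded_linear dD[OF t]])
    have d2: "((\<lambda>t. (A *v D t) \<bullet> (A *v D t)) has_vector_derivative ((A *v D t) \<bullet> (A *v D' t) + (A *v D' t) \<bullet> (A *v D t))) (at t within {s..1})"
      by (rule bounded_bilinear.has_vector_derivative[OF bounded_bilinear_inner dA dA])
    have d3: "((\<lambda>t. g*(1-t)) has_vector_derivative (-g)) (at t within {s..1})"
      by (auto intro!: derivative_eq_intros)
    have d4: "((\<lambda>t. (g*(1-t)) * ((A *v D t) \<bullet> (A *v D t))) has_vector_derivative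
       ((g*(1-t)) * ((A *v D t) \<bullet> (A *v D' t) + (A *v D' t) \<bullet> (A *v D t)) + (-g) * ((A *v D t) \<bullet> (A *v D t)))) (at t within {s..1})"
      by (rule has_vector_derivative_mult[OF d3 d2])
    show ?thesis unfolding E_def[abs_def] E'_def
      by (rule has_vector_derivative_add[OF d1 d4])
  qed
  have E'le: "E' t \<le> 0" if t: "t \<in> {s..1}" for t
  proof -
    have "PP A g t *v D' t = bb A y g (Y t) - bb A y g (Z t)"
      unfolding D'_def using uopt_eq[OF g, of t A y] t by (simp add: algebra_simps)
    also have "\<dots> = - g *\<^sub>R (transpose A *v (A *v D t))" unfolding D_def by (rule bb_diff)
    finally have P: "PP A g t *v D' t = - g *\<^sub>R (transpose A *v (A *v D t))" .
    have "D t \<bullet> (PP A g t *v D' t) = D t \<bullet> D' t + (g*(1-t)) * ((A *v D t) \<bullet> (A *v D' t))"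
      unfolding PP_apply by (simp add: inner_add_right tr_inner')
    moreover have "D t \<bullet> (PP A g t *v D' t) = - g * ((A *v D t) \<bullet> (A *v D t))"
      unfolding P by (simp add: tr_inner')
    ultimately have "D t \<bullet> D' t + (g*(1-t)) * ((A *v D t) \<bullet> (A *v D' t)) = - g * ((A *v D t) \<bullet> (A *v D t))"
      by simp
    then have "E' t = - 3 * g * ((A *v D t) \<bullet> (A *v D t))"
      unfolding E'_def by (simp add: inner_commute algebra_simps)
    then show ?thesis using g by (simp add: mult_nonneg_nonneg)
  qed
  fix t assume t: "t \<in> {s..1}"
  have "(E' has_integral (E t - E s)) {s..t}"
    apply (rule fundamental_theorem_of_calculus)
    using t apply simp
    apply (rule has_vector_derivative_within_subset[OF dE])
    using t by auto
  then have "E t - E s \<le> 0"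
    using has_integral_le[OF _ has_integral_0, of E' "E t - E s" "{s..t}"] E'le t by auto
  moreover have "E s = 0" unfolding E_def D_def using Y Z unfolding is_trajectory_def by simp
  moreover have "D t \<bullet> D t \<le> E t" unfolding E_def using g t by (simp add: mult_nonneg_nonneg)
  ultimately have "D t \<bullet> D t \<le> 0" by simp
  then have "D t = 0" by (metis inner_eq_zero_iff inner_ge_zero order_antisym)
  then show "Y t = Z t" unfolding D_def by simp
qed


lemma uopt_adm: fixes A :: "real^'d^'k" assumes g: "0 \<le> g" shows "admissible (uopt A y g)"
  unfolding admissible_def
proof (intro conjI allI ballI uopt_cont[OF g])
  fix x s assume s: "s \<in> {0..<1::real}"
  show "\<exists>X. is_trajectory (uopt A y g) s x X \<and>
             (\<forall>Y. is_trajectory (uopt A y g) s x Y \<longrightarrow> (\<forall>t\<in>{s..1}. Y t = X t))"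
    using traj_line[OF g, of s A y x] traj_unique[OF g, of s A y x] s by auto
qed

lemma traj_uopt: fixes A :: "real^'d^'k" assumes g: "0 \<le> g" and s: "s \<le> 1" and t: "t \<in> {s..1}"
  shows "traj (uopt A y g) s x t = x + (t - s) *\<^sub>R uopt A y g x s"
proof -
  have "is_trajectory (uopt A y g) s x (traj (uopt A y g) s x)"
    using traj_line[OF g s, of A y x] unfolding traj_def by (metis someI)
  then show ?thesis using traj_unique[OF g s _ traj_line[OF g s]] t by blast
qed

lemma cost_uopt: fixes A :: "real^'d^'k" assumes g: "0 \<le> g" and s: "s \<le> 1"
  shows "cost A y g (uopt A y g) s x = (1-s)/2 * (norm (uopt A y g x s))\<^sup>2
     + (g/2) * (norm (A *v (x + (1-s) *\<^sub>R uopt A y g x s) - y))\<^sup>2"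
proof -
  have "integral {s..1} (\<lambda>t. (1/2) * (norm (uopt A y g (traj (uopt A y g) s x t) t))\<^sup>2)
      = integral {s..1} (\<lambda>t. (1/2) * (norm (uopt A y g x s))\<^sup>2)"
    by (rule integral_cong) (simp add: traj_uopt[OF g s] line_uopt[OF g s])
  also have "\<dots> = (1-s)/2 * (norm (uopt A y g x s))\<^sup>2" using s by simp
  finally have I: "integral {s..1} (\<lambda>t. (1/2) * (norm (uopt A y g (traj (uopt A y g) s x t) t))\<^sup>2)
      = (1-s)/2 * (norm (uopt A y g x s))\<^sup>2" .
  have T1: "traj (uopt A y g) s x 1 = x + (1-s) *\<^sub>R uopt A y g x s" using traj_uopt[OF g s, of 1] s by simp
  show ?thesis unfolding cost_def T1 I ..
qed


lemma cost_decomp: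
  fixes A :: "real^'d^'k" and W :: "real^'d \<Rightarrow> real \<Rightarrow> real^'d" and x :: "real^'d"
  assumes adm: "admissible W" and s0: "0 \<le> s" and s1: "s < 1"
  defines "X \<equiv> traj W s x"
  defines "V \<equiv> \<lambda>t. W (X t) t"
  defines "m \<equiv> (1/(1-s)) *\<^sub>R (X 1 - x)"
  shows "continuous_on {s..1} V" and "V s = W x s" and "X 1 = x + (1-s) *\<^sub>R m"
    and "cost A y g W s x = integral {s..1} (\<lambda>t. (1/2) * (norm (V t - m))\<^sup>2)
            + (1-s)/2 * (norm m)\<^sup>2 + (g/2) * (norm (A *v X 1 - y))\<^sup>2"
proof -
  have "\<exists>X. is_trajectory W s x X" using adm s0 s1 unfolding admissible_def by fastforce
  then have tr: "is_trajectory W s x X" unfolding X_def traj_def by (rule someI_ex)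
  then have Xs: "X s = x" and dX: "\<And>t. t \<in> {s..1} \<Longrightarrow> (X has_vector_derivative V t) (at t within {s..1})"
    unfolding is_trajectory_def V_def by auto
  have cX: "continuous_on {s..1} X"
    unfolding continuous_on_eq_continuous_within
    using dX has_vector_derivative_continuous by blast
  have cW: "continuous_on (UNIV \<times> {0..1}) (\<lambda>(x,t). W x t)" using adm unfolding admissible_def by blast
  have cXt: "continuous_on {s..1} (\<lambda>t. (X t, t))" by (intro continuous_intros cX)
  have "continuous_on {s..1} ((\<lambda>(x,t). W x t) \<circ> (\<lambda>t. (X t, t)))"
    by (rule continuous_on_compose[OF cXt continuous_on_subset[OF cW]]) (use s0 in auto)
  then show cV: "continuous_on {s..1} V" unfolding V_def o_def by simp
  show "V s = W x s" unfolding V_def Xs ..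
  show X1: "X 1 = x + (1-s) *\<^sub>R m" unfolding m_def using s1 by simp
  have iV: "(V has_integral (X 1 - x)) {s..1}"
    using fundamental_theorem_of_calculus[of s 1 X V] dX s1 Xs by simp
  have iVm: "((\<lambda>t. V t \<bullet> m) has_integral ((X 1 - x) \<bullet> m)) {s..1}"
    using has_integral_linear[OF iV bounded_linear_inner_left[of m]] by (simp add: o_def)
  have cR: "continuous_on {s..1} (\<lambda>t. (1/2) * (norm (V t - m))\<^sup>2)"
    by (intro continuous_intros cV)
  then have iR: "((\<lambda>t. (1/2) * (norm (V t - m))\<^sup>2) has_integral integral {s..1} (\<lambda>t. (1/2) * (norm (V t - m))\<^sup>2)) {s..1}"
    using integrable_continuous_interval by blast
  have iC: "((\<lambda>t. (1/2) * (norm m)\<^sup>2) has_integral ((1-s) * ((1/2) * (norm m)\<^sup>2))) {s..1}"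
    using has_integral_const_real[of "(1/2) * (norm m)\<^sup>2" s 1] s1 by simp
  have pt: "(1/2) * (norm (V t))\<^sup>2 = (1/2) * (norm (V t - m))\<^sup>2 + V t \<bullet> m - (1/2) * (norm m)\<^sup>2" for t
    by (simp add: power2_norm_eq_inner inner_diff_left inner_diff_right inner_commute algebra_simps)
  have "((\<lambda>t. (1/2) * (norm (V t))\<^sup>2) has_integral
      (integral {s..1} (\<lambda>t. (1/2) * (norm (V t - m))\<^sup>2) + (X 1 - x) \<bullet> m - (1-s) * ((1/2) * (norm m)\<^sup>2))) {s..1}"
    unfolding pt by (intro has_integral_diff has_integral_add iR iVm iC)
  moreover have "(X 1 - x) \<bullet> m = (1-s) * (norm m)\<^sup>2"
    unfolding X1 by (simp add: power2_norm_eq_inner)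
  ultimately have "integral {s..1} (\<lambda>t. (1/2) * (norm (V t))\<^sup>2) =
      integral {s..1} (\<lambda>t. (1/2) * (norm (V t - m))\<^sup>2) + (1-s) * (norm m)\<^sup>2 - (1-s) * ((1/2) * (norm m)\<^sup>2)"
    by (metis integral_unique)
  also have "\<dots> = integral {s..1} (\<lambda>t. (1/2) * (norm (V t - m))\<^sup>2) + (1-s)/2 * (norm m)\<^sup>2"
    by (simp add: algebra_simps)
  finally show "cost A y g W s x = integral {s..1} (\<lambda>t. (1/2) * (norm (V t - m))\<^sup>2)
            + (1-s)/2 * (norm m)\<^sup>2 + (g/2) * (norm (A *v X 1 - y))\<^sup>2"
    unfolding cost_def V_def X_def by simp
qed


lemma F_ineq:
  fixes A :: "real^'d^'k" and x m :: "real^'d"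
  assumes g: "0 \<le> g" and s: "s \<le> 1"
  shows "(1-s)/2 * (norm (uopt A y g x s))\<^sup>2 + (g/2) * (norm (A *v (x + (1-s) *\<^sub>R uopt A y g x s) - y))\<^sup>2
          + (1-s)/2 * (norm (m - uopt A y g x s))\<^sup>2
        \<le> (1-s)/2 * (norm m)\<^sup>2 + (g/2) * (norm (A *v (x + (1-s) *\<^sub>R m) - y))\<^sup>2"
proof -
  define v where "v = uopt A y g x s"
  define zs where "zs = x + (1-s) *\<^sub>R v"
  define \<delta> where "\<delta> = m - v"
  define a where "a = A *v \<delta>"
  define w where "w = A *v zs - y"
  have "PP A g s *v v = bb A y g x" unfolding v_def by (rule uopt_eq[OF g s])
  then have hv: "v = bb A y g zs"
    unfolding zs_def bb_shift PP_apply by (simp add: algebra_simps)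
  have m: "m = v + \<delta>" unfolding \<delta>_def by simp
  have e1: "A *v (x + (1-s) *\<^sub>R m) - y = w + (1-s) *\<^sub>R a"
    unfolding w_def a_def zs_def m by (simp add: algebra_simps)
  have "\<delta> \<bullet> v = g * (\<delta> \<bullet> (transpose A *v (y - A *v zs)))"
    unfolding hv bb_def by simp
  also have "\<dots> = - g * (a \<bullet> w)"
    unfolding tr_inner a_def w_def by (simp add: inner_diff_right algebra_simps)
  finally have dv: "\<delta> \<bullet> v = - g * (a \<bullet> w)" .
  have n1: "(norm m)\<^sup>2 = (norm v)\<^sup>2 + 2 * (\<delta> \<bullet> v) + (norm \<delta>)\<^sup>2"
    unfolding m power2_norm_eq_inner by (simp add: inner_add_left inner_add_right inner_commute)
  have n2: "(norm (w + (1-s) *\<^sub>R a))\<^sup>2 = (norm w)\<^sup>2 + 2 * (1-s) * (a \<bullet> w) + (1-s)\<^sup>2 * (norm a)\<^sup>2"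
    unfolding power2_norm_eq_inner
    by (simp add: inner_add_left inner_add_right inner_commute power2_eq_square algebra_simps)
  have eq: "(1-s)/2 * (norm m)\<^sup>2 + (g/2) * (norm (A *v (x + (1-s) *\<^sub>R m) - y))\<^sup>2
      = (1-s)/2 * (norm v)\<^sup>2 + (g/2) * (norm w)\<^sup>2 + (1-s)/2 * (norm \<delta>)\<^sup>2 + (g/2) * ((1-s)\<^sup>2 * (norm a)\<^sup>2)"
    unfolding e1 n1 n2 dv by (simp add: field_simps)
  have "0 \<le> (g/2) * ((1-s)\<^sup>2 * (norm a)\<^sup>2)" using g by simp
  then show ?thesis unfolding eq using zs_def w_def \<delta>_def v_def by simp
qed


lemma cost_lower:
  fixes A :: "real^'d^'k" and W :: "real^'d \<Rightarrow> real \<Rightarrow> real^'d" and x :: "real^'d"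
  assumes g: "0 \<le> g" and adm: "admissible W" and s0: "0 \<le> s" and s1: "s < 1"
  defines "V \<equiv> \<lambda>t. W (traj W s x t) t"
  defines "m \<equiv> (1/(1-s)) *\<^sub>R (traj W s x 1 - x)"
  shows "cost A y g (uopt A y g) s x + integral {s..1} (\<lambda>t. (1/2) * (norm (V t - m))\<^sup>2)
          + (1-s)/2 * (norm (m - uopt A y g x s))\<^sup>2 \<le> cost A y g W s x"
    and "0 \<le> integral {s..1} (\<lambda>t. (1/2) * (norm (V t - m))\<^sup>2)"
    and "((\<lambda>t. (1/2) * (norm (V t - m))\<^sup>2) has_integral integral {s..1} (\<lambda>t. (1/2) * (norm (V t - m))\<^sup>2)) {s..1}"
    and "continuous_on {s..1} (\<lambda>t. (1/2) * (norm (V t - m))\<^sup>2)"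
    and "V s = W x s"
proof -
  note D = cost_decomp[where x=x, OF adm s0 s1, folded V_def m_def]
  show cR: "continuous_on {s..1} (\<lambda>t. (1/2) * (norm (V t - m))\<^sup>2)"
    by (intro continuous_intros D(1))
  then show iR: "((\<lambda>t. (1/2) * (norm (V t - m))\<^sup>2) has_integral integral {s..1} (\<lambda>t. (1/2) * (norm (V t - m))\<^sup>2)) {s..1}"
    using integrable_continuous_interval by blast
  show I0: "0 \<le> integral {s..1} (\<lambda>t. (1/2) * (norm (V t - m))\<^sup>2)"
    by (rule has_integral_nonneg[OF iR]) simp
  show "V s = W x s" unfolding V_def by (rule D(2))
  have F: "(1-s)/2 * (norm (uopt A y g x s))\<^sup>2 + (g/2) * (norm (A *v (x + (1-s) *\<^sub>R uopt A y g x s) - y))\<^sup>2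
          + (1-s)/2 * (norm (m - uopt A y g x s))\<^sup>2
        \<le> (1-s)/2 * (norm m)\<^sup>2 + (g/2) * (norm (A *v (x + (1-s) *\<^sub>R m) - y))\<^sup>2"
    by (rule F_ineq[OF g]) (use s1 in simp)
  show "cost A y g (uopt A y g) s x + integral {s..1} (\<lambda>t. (1/2) * (norm (V t - m))\<^sup>2)
          + (1-s)/2 * (norm (m - uopt A y g x s))\<^sup>2 \<le> cost A y g W s x"
  proof -
    have C: "cost A y g (uopt A y g) s x = (1-s)/2 * (norm (uopt A y g x s))\<^sup>2
     + (g/2) * (norm (A *v (x + (1-s) *\<^sub>R uopt A y g x s) - y))\<^sup>2"
      by (rule cost_uopt[OF g]) (use s1 in simp)
    show ?thesis unfolding D(4) C using F D(3) by (simp add: V_def)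
  qed
qed

lemma uopt_optimal:
  fixes A :: "real^'d^'k"
  assumes g: "0 \<le> g" and s0: "0 \<le> s" and s1: "s < 1"
  shows "optimal_from A y g (uopt A y g) s x"
  unfolding optimal_from_def
proof (intro conjI allI impI uopt_adm[OF g])
  fix W :: "real^'d \<Rightarrow> real \<Rightarrow> real^'d" assume adm: "admissible W"
  note L = cost_lower[OF g adm s0 s1, where x=x]
  have "0 \<le> (1-s)/2 * (norm (((1/(1-s)) *\<^sub>R (traj W s x 1 - x)) - uopt A y g x s))\<^sup>2" using s1 by simp
  then show "cost A y g (uopt A y g) s x \<le> cost A y g W s x" using L(1)[where A=A and y=y] L(2) by linarith
qed

lemma optimal_unique:
  fixes A :: "real^'d^'k"
  assumes g: "0 \<le> g" and s0: "0 \<le> s" and s1: "s < 1" and opt: "optimal_from A y g W s x"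
  shows "W x s = uopt A y g x s"
proof -
  have adm: "admissible W" using opt unfolding optimal_from_def by blast
  have le: "cost A y g W s x \<le> cost A y g (uopt A y g) s x"
    using opt uopt_adm[OF g] unfolding optimal_from_def by blast
  define m where "m = (1/(1-s)) *\<^sub>R (traj W s x 1 - x)"
  note L = cost_lower[where x=x, OF g adm s0 s1, folded m_def]
  define I where "I = integral {s..1} (\<lambda>t. (1/2) * (norm (W (traj W s x t) t - m))\<^sup>2)"
  have n0: "0 \<le> (1-s)/2 * (norm (m - uopt A y g x s))\<^sup>2" using s1 by simp
  have "I = 0" using L(1)[where A=A and y=y] L(2) le n0 unfolding I_def by linarith
  moreover have "(1-s)/2 * (norm (m - uopt A y g x s))\<^sup>2 = 0" using L(1)[where A=A and y=y] L(2) le n0 by linarith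
  then have mv: "m = uopt A y g x s" using s1 by simp
  define f where "f = (\<lambda>t. (1/2) * (norm (W (traj W s x t) t - m))\<^sup>2)"
  have "f s = 0"
  proof (rule has_integral_0_cbox_imp_0[of s 1 f s])
    show "continuous_on (cbox s 1) f" using L(4) unfolding f_def by simp
    show "(f has_integral 0) (cbox s 1)" using L(3) \<open>I = 0\<close> unfolding I_def f_def by simp
    show "box s 1 \<noteq> {}" using s1 by simp
    show "s \<in> cbox s 1" using s1 by simp
  qed (simp add: f_def)
  then have "W (traj W s x s) s = m" unfolding f_def by simp
  then show ?thesis using L(5) mv by simp
qed


lemma uopt_limit:
  fixes A :: "real^'d^'k"
  assumes inv: "invertible (transpose A ** A)" and t: "t < 1"
  shows "((\<lambda>g. uopt A y g x t) \<longlongrightarrow>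
           (1 / (1 - t)) *\<^sub>R (matrix_inv (transpose A ** A) *v (transpose A *v (y - A *v x)))) at_top"
proof -
  define M where "M = transpose A ** A"
  define Mi where "Mi = matrix_inv M"
  define b0 where "b0 = transpose A *v (y - A *v x)"
  define wi where "wi = (1 / (1 - t)) *\<^sub>R (Mi *v b0)"
  have MiM: "M ** Mi = mat 1 \<and> Mi ** M = mat 1"
    using inv unfolding Mi_def M_def matrix_inv_def invertible_def by (rule someI_ex)
  have Mwi: "M *v wi = (1 / (1 - t)) *\<^sub>R b0"
    unfolding wi_def by (simp add: matrix_vector_mult_scaleR matrix_vector_mul_assoc MiM)
  obtain K where K: "K > 0" "\<And>z. norm (Mi *v z) \<le> norm z * K"
    using bounded_linear.pos_bounded[OF matrix_vector_mul_bounded_linear[of Mi]] by blast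
  have bound: "norm (uopt A y g x t - wi) \<le> (K * norm wi / (1 - t)) * inverse g" if g: "g > 0" for g
  proof -
    define w where "w = uopt A y g x t"
    have "PP A g t *v w = bb A y g x" unfolding w_def by (rule uopt_eq) (use g t in auto)
    then have e: "w + (g*(1-t)) *\<^sub>R (M *v w) = g *\<^sub>R b0"
      unfolding PP_apply bb_def M_def b0_def by (simp add: matrix_vector_mul_assoc)
    have "(g*(1-t)) *\<^sub>R (M *v wi) = g *\<^sub>R b0" unfolding Mwi using t by simp
    with e have e2: "(g*(1-t)) *\<^sub>R (M *v (wi - w)) = w"
      by (simp add: algebra_simps)
    have "Mi *v w = Mi *v ((g*(1-t)) *\<^sub>R (M *v (wi - w)))" using e2 by simp
    also have "\<dots> = (g*(1-t)) *\<^sub>R (wi - w)"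
      by (simp add: matrix_vector_mult_scaleR matrix_vector_mul_assoc MiM)
    finally have "Mi *v w = (g*(1-t)) *\<^sub>R (wi - w)" .
    then have e3: "w - wi = - (1 / (g*(1-t))) *\<^sub>R (Mi *v w)"
      using g t by simp
    have "(wi - w) \<bullet> w = (wi - w) \<bullet> ((g*(1-t)) *\<^sub>R (M *v (wi - w)))" using e2 by simp
    also have "\<dots> = (g*(1-t)) * ((wi - w) \<bullet> (M *v (wi - w)))" by simp
    finally have "(wi - w) \<bullet> w = (g*(1-t)) * ((wi - w) \<bullet> (M *v (wi - w)))" .
    also have "\<dots> \<ge> 0" unfolding M_def M_inner using g t by simp
    finally have "w \<bullet> w \<le> wi \<bullet> w" by (simp add: inner_diff_left)
    also have "\<dots> \<le> norm wi * norm w" by (rule norm_cauchy_schwarz)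
    finally have "norm w * norm w \<le> norm wi * norm w" by (simp add: power2_eq_square[symmetric] power2_norm_eq_inner[symmetric])
    then have nw: "norm w \<le> norm wi"
      by (cases "norm w = 0") (auto simp: mult_le_cancel_right)
    have "norm (w - wi) = (1 / (g*(1-t))) * norm (Mi *v w)"
      unfolding e3 using g t by simp
    also have "\<dots> \<le> (1 / (g*(1-t))) * (norm wi * K)"
      using K(2)[of w] nw K(1) g t
      by (intro mult_left_mono) (auto intro: order_trans mult_right_mono)
    also have "\<dots> = (K * norm wi / (1 - t)) * inverse g"
      using g t by (simp add: field_simps)
    finally show ?thesis unfolding w_def .
  qed
  have ev: "eventually (\<lambda>g. norm (uopt A y g x t - wi) \<le> (K * norm wi / (1 - t)) * inverse g) at_top"
    using eventually_gt_at_top[of 0] by eventually_elim (rule bound)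
  have lim0: "((\<lambda>g::real. (K * norm wi / (1 - t)) * inverse g) \<longlongrightarrow> 0) at_top"
    by (intro tendsto_mult_right_zero tendsto_inverse_0_at_top filterlim_ident)
  have "((\<lambda>g. uopt A y g x t - wi) \<longlongrightarrow> 0) at_top"
    by (rule Lim_null_comparison[OF ev lim0])
  then have "((\<lambda>g. uopt A y g x t) \<longlongrightarrow> wi) at_top"
    by (rule LIM_zero_cancel)
  then show ?thesis unfolding wi_def Mi_def M_def b0_def .
qed


theorem proposition1:
  fixes A :: "real^'d^'k" and y1 :: "real^'k" and x0 :: "real^'d" and t0 :: real
  assumes "0 \<le> t0" and "t0 < 1" and "invertible (transpose A ** A)"
  shows "(\<forall>\<gamma>>0. \<exists>u. optimal_from A y1 \<gamma> u t0 x0 \<and>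
                (\<forall>x. \<forall>s\<in>{t0..<1}. optimal_from A y1 \<gamma> u s x))
       \<and> (\<forall>U. (\<forall>\<gamma>>0. optimal_from A y1 \<gamma> (U \<gamma>) t0 x0 \<and>
                     (\<forall>x. \<forall>s\<in>{t0..<1}. optimal_from A y1 \<gamma> (U \<gamma>) s x)) \<longrightarrow>
              (\<forall>x. \<forall>t\<in>{t0..<1}.
                 ((\<lambda>\<gamma>. U \<gamma> x t) \<longlongrightarrow>
                   (1 / (1 - t)) *\<^sub>R (matrix_inv (transpose A ** A) *v (transpose A *v (y1 - A *v x))))
                 at_top))"
proof (intro conjI allI impI ballI)
  fix \<gamma> :: real assume g: "\<gamma> > 0"
  show "\<exists>u. optimal_from A y1 \<gamma> u t0 x0 \<and> (\<forall>x. \<forall>s\<in>{t0..<1}. optimal_from A y1 \<gamma> u s x)"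
  proof (intro exI conjI allI ballI)
    show "optimal_from A y1 \<gamma> (uopt A y1 \<gamma>) t0 x0"
      using uopt_optimal[of \<gamma> t0] g assms(1,2) by simp
    fix x and s assume "s \<in> {t0..<1}"
    then show "optimal_from A y1 \<gamma> (uopt A y1 \<gamma>) s x"
      using uopt_optimal[of \<gamma> s] g assms(1,2) by simp
  qed
next
  fix U :: "real \<Rightarrow> real^'d \<Rightarrow> real \<Rightarrow> real^'d" and x t
  assume H: "\<forall>\<gamma>>0. optimal_from A y1 \<gamma> (U \<gamma>) t0 x0 \<and>
                     (\<forall>x. \<forall>s\<in>{t0..<1}. optimal_from A y1 \<gamma> (U \<gamma>) s x)"
    and t: "t \<in> {t0..<1}"
  have ev: "eventually (\<lambda>\<gamma>. uopt A y1 \<gamma> x t = U \<gamma> x t) at_top"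
    using eventually_gt_at_top[of 0]
  proof eventually_elim
    case (elim \<gamma>)
    then show ?case using optimal_unique[of \<gamma> t A y1 "U \<gamma>" x] H t assms(1) by auto
  qed
  have lim: "((\<lambda>\<gamma>. uopt A y1 \<gamma> x t) \<longlongrightarrow>
                   (1 / (1 - t)) *\<^sub>R (matrix_inv (transpose A ** A) *v (transpose A *v (y1 - A *v x)))) at_top"
    by (rule uopt_limit[OF assms(3)]) (use t in simp)
  show "((\<lambda>\<gamma>. U \<gamma> x t) \<longlongrightarrow>
                   (1 / (1 - t)) *\<^sub>R (matrix_inv (transpose A ** A) *v (transpose A *v (y1 - A *v x)))) at_top"
    by (rule Lim_transform_eventually[OF lim ev])
qed

end
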